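(* Let $c_1=2$, let $c_2\ge4$ be a real number, let $c_3\in(0,1)$, and let $c_4=8H$ where $H\ge2$. Define $g_1(m)=-c_3m+c_1\sqrt{m}\ln(c_2m)+c_4\ln(m)$. Then for all real $m\ge2$, $$g_1(m)\le\frac{132c_1c_4}{c_3}\left[\ln\!\left(\frac{10\sqrt{c_2c_4}}{c_3}\right)\right]^2.$$ *)

theory Defs
  imports Complex_Main
begin

end

theory Submission
  imports Defs
begin

lemma ln_tan: "0 < (x::real) \<Longrightarrow> 0 < t \<Longrightarrow> ln x \<le> ln t + x / t - 1"
  using ln_le_minus_one[of "x/t"] by (simp add: ln_div)

theorem lemma1:
  fixes c1 c2 c3 c4 H m :: real
  assumes "c1 = 2" and "c2 \<ge> 4" and "0 < c3" and "c3 < 1"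
    and "H \<ge> 2" and "c4 = 8 * H" and "m \<ge> 2"
  shows "- c3 * m + c1 * sqrt m * ln (c2 * m) + c4 * ln m
         \<le> 132 * c1 * c4 / c3 * (ln (10 * sqrt (c2 * c4) / c3)) ^ 2"
proof -
  define a where "a = c3"
  define b where "b = c2"
  define c where "c = c4"
  define s where "s = sqrt m"
  define L where "L = ln (10 * sqrt (b * c) / a)"
  define T where "T = 16 * sqrt b / a"
  have a: "0 < a" "a < 1" using assms a_def by auto
  have b: "b \<ge> 4" using assms b_def by auto
  have c: "c \<ge> 16" using assms c_def by auto
  have s: "s > 0" "s^2 = m" using assms s_def by auto
  have sb: "sqrt b \<ge> 2" using b real_sqrt_le_mono[of 4 b] by simp
  have sbp: "sqrt b > 0" using sb by linarith
  have bsp: "sqrt b * s > 0" using s sb by (smt (verit) mult_pos_pos)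
  have sc: "sqrt c \<ge> 4" using c real_sqrt_le_mono[of 16 c] by simp
  have T1: "T \<ge> 1" unfolding T_def using a sb by (simp add: field_simps)
  have Tpos: "T > 0" using T1 by simp
  have "T \<le> 10 * sqrt (b * c) / a"
  proof -
    have "16 * sqrt b \<le> 10 * (sqrt b * sqrt c)" using sb sc
    proof -
      have "16 * sqrt b \<le> 4 * sqrt b * sqrt c" using mult_left_mono[OF sc, of "4 * sqrt b"] sb b by (simp add: mult.assoc)
      thus ?thesis using sb by linarith
    qed
    then show ?thesis unfolding T_def using a by (simp add: real_sqrt_mult divide_right_mono)
  qed
  hence TL: "ln T \<le> L" unfolding L_def using Tpos by simp
  have lT0: "0 \<le> ln T" using T1 by simp
  have bc: "10 * sqrt (b * c) / a \<ge> 80"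
  proof -
    have "sqrt b * sqrt c \<ge> 8" using mult_mono[OF sb sc] b by simp
    hence "10 * sqrt (b * c) \<ge> 80" by (simp add: real_sqrt_mult)
    hence "10 * sqrt (b * c) \<ge> 80 * a" using a by linarith
    thus ?thesis using a by (simp add: field_simps)
  qed
  have L1: "L \<ge> 1"
  proof -
    have "exp (1::real) \<le> 80" using exp_le by linarith
    hence "ln (exp 1) \<le> ln (10 * sqrt (b * c) / a)" using bc by (subst ln_le_cancel_iff) auto
    thus ?thesis unfolding L_def by simp
  qed
  have lnbm: "ln (b * m) = 2 * ln (sqrt b * s)"
  proof -
    have "b * m = (sqrt b * s)^2" using s b by (simp add: power_mult_distrib)
    moreover have "sqrt b * s > 0" using s sb by (smt (verit) mult_pos_pos)
    ultimately show ?thesis by (simp add: ln_realpow)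
  qed
  have "ln (sqrt b * s) \<le> ln T + sqrt b * s / T - 1"
    using ln_tan[OF bsp Tpos] .
  moreover have "sqrt b * s / T = a * s / 16" unfolding T_def using a sbp by (simp add: divide_simps)
  ultimately have l1: "ln (b * m) \<le> 2 * ln T + a * s / 8 - 2" using lnbm by simp
  have "- a * m / 2 + 2 * s * ln (b * m) \<le> - a * s^2 / 2 + 2 * s * (2 * ln T + a * s / 8 - 2)"
    using l1 s by (simp add: mult_left_mono)
  also have "\<dots> \<le> 4 * s * ln T - a * s^2 / 4" using s by (simp add: algebra_simps power2_eq_square)
  also have "\<dots> \<le> 16 * (ln T)^2 / a"
  proof -
    have "0 \<le> (4 * ln T - a * s / 2)^2" by simp
    hence "a * (4 * s * ln T - a * s^2 / 4) \<le> 16 * (ln T)^2"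
      by (simp add: algebra_simps power2_eq_square)
    thus ?thesis using a by (simp add: field_simps)
  qed
  also have "\<dots> \<le> 16 * L^2 / a" using TL lT0 a
    by (simp add: divide_right_mono power_mono)
  finally have P1: "- a * m / 2 + 2 * s * ln (b * m) \<le> 16 * L^2 / a" .
  have "ln m \<le> ln (2 * c / a) + m / (2 * c / a) - 1"
    using ln_tan[of m "2*c/a"] a c assms(7) by simp
  hence "c * ln m \<le> c * (ln (2 * c / a) + m / (2 * c / a) - 1)" using c by (simp add: mult_left_mono)
  also have "\<dots> = c * ln (2 * c / a) + a * m / 2 - c" using a c by (simp add: field_simps)
  finally have l2: "- a * m / 2 + c * ln m \<le> c * ln (2 * c / a)" using c by simp
  have "2 * c / a \<le> (10 * sqrt (b * c) / a)^2"
  proof -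
    have e: "(10 * sqrt (b * c) / a)^2 = 100 * b * c / a^2" using b c by (simp add: power_divide power_mult_distrib)
    have h1: "c * a \<le> c * 1" using a c by (intro mult_left_mono) auto
    have h2: "4 * c \<le> b * c" using b c by (intro mult_right_mono) auto
    have "2 * c * a \<le> 100 * b * c" using h1 h2 c by linarith
    hence "2 * c / a \<le> 100 * b * c / a^2" using a by (simp add: field_simps power2_eq_square)
    thus ?thesis using e by simp
  qed
  hence "ln (2 * c / a) \<le> ln ((10 * sqrt (b * c) / a)^2)" using a c bc by (subst ln_le_cancel_iff) auto
  also have "\<dots> = 2 * L" unfolding L_def using bc by (simp add: ln_realpow)
  finally have "c * ln (2 * c / a) \<le> c * (2 * L)" using c by (simp add: mult_left_mono)
  with l2 have P2: "- a * m / 2 + c * ln m \<le> 2 * c * L" by simp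
  have "2 * c * L \<le> 2 * c * L^2 / a"
  proof -
    have "L \<le> L^2" using L1 by (simp add: power2_eq_square)
    also have "\<dots> \<le> L^2 / a" using a L1 by (simp add: field_simps)
    finally have "(2 * c) * L \<le> (2 * c) * (L^2 / a)" using c by (intro mult_left_mono) auto
    thus ?thesis by simp
  qed
  moreover have "16 * L^2 / a \<le> c * L^2 / a" using c a by (simp add: divide_right_mono mult_right_mono)
  moreover have X0: "0 \<le> c * L^2 / a" using c a by simp
  moreover have "2 * c * L^2 / a = 2 * (c * L^2 / a)" by simp
  moreover have "264 * c * L^2 / a = 264 * (c * L^2 / a)" by simp
  ultimately have "- a * m + 2 * s * ln (b * m) + c * ln m \<le> 264 * c * L^2 / a"
    using P1 P2 by linarith
  thus ?thesis using assms unfolding a_def b_def c_def s_def L_def by simp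
qed

end
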